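(* Let $G$ be an oriented graph. A set $I\subseteq V(G)$ is an oriented independent set if and only if no two vertices of $I$ are adjacent and no two vertices of $I$ are connected by a directed $2$-path.
   Context: An oriented graph is a finite directed graph with no directed cycle of length 1 or 2. An oriented coloring of $G$ is a map $f$ from $V(G)$ to a set of colors such that (i) $f(x)\neq f(y)$ for every arc $xy$, and (ii) for all arcs $xy, zw$, $f(y)=f(z)$ implies $f(x)\neq f(w)$. A set $I\subseteq V(G)$ is an oriented independent set if for every two distinct $x,y\in I$ there is an oriented coloring $f$ of $G$ with $f(x)=f(y)$. Vertices $x,y$ are connected by a directed $2$-path if for some vertex $v$, $xv$ and $vy$ are arcs, or $yv$ and $vx$ are arcs. *)

theory Defs
  imports Main
begin

definition oriented_graph :: "'a set \<Rightarrow> ('a \<times> 'a) set \<Rightarrow> bool" where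
  "oriented_graph V A \<longleftrightarrow> finite V \<and> A \<subseteq> V \<times> V \<and>
     (\<forall>x. (x, x) \<notin> A) \<and> (\<forall>x y. (x, y) \<in> A \<longrightarrow> (y, x) \<notin> A)"

text \<open>Oriented colouring with colours taken from nat (a countable colour
  supply suffices for finite graphs).\<close>
definition oriented_coloring :: "'a set \<Rightarrow> ('a \<times> 'a) set \<Rightarrow> ('a \<Rightarrow> nat) \<Rightarrow> bool" where
  "oriented_coloring V A f \<longleftrightarrow>
     (\<forall>x y. (x, y) \<in> A \<longrightarrow> f x \<noteq> f y) \<and>
     (\<forall>x y z w. (x, y) \<in> A \<longrightarrow> (z, w) \<in> A \<longrightarrow> f y = f z \<longrightarrow> f x \<noteq> f w)"

definition oriented_independent :: "'a set \<Rightarrow> ('a \<times> 'a) set \<Rightarrow> 'a set \<Rightarrow> bool" where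
  "oriented_independent V A I \<longleftrightarrow> I \<subseteq> V \<and>
     (\<forall>x\<in>I. \<forall>y\<in>I. x \<noteq> y \<longrightarrow> (\<exists>f. oriented_coloring V A f \<and> f x = f y))"

definition adjacent :: "('a \<times> 'a) set \<Rightarrow> 'a \<Rightarrow> 'a \<Rightarrow> bool" where
  "adjacent A x y \<longleftrightarrow> (x, y) \<in> A \<or> (y, x) \<in> A"

definition directed_2path :: "('a \<times> 'a) set \<Rightarrow> 'a \<Rightarrow> 'a \<Rightarrow> bool" where
  "directed_2path A x y \<longleftrightarrow> (\<exists>v. ((x, v) \<in> A \<and> (v, y) \<in> A) \<or> ((y, v) \<in> A \<and> (v, x) \<in> A))"

end

theory Submission
  imports Defs
begin

theorem proposition3:
  fixes V :: "'a set" and A :: "('a \<times> 'a) set" and I :: "'a set"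
  assumes "oriented_graph V A" and "I \<subseteq> V"
  shows "oriented_independent V A I \<longleftrightarrow>
    (\<forall>x\<in>I. \<forall>y\<in>I. x \<noteq> y \<longrightarrow> \<not> adjacent A x y \<and> \<not> directed_2path A x y)"
proof
  assume H: "oriented_independent V A I"
  show "\<forall>x\<in>I. \<forall>y\<in>I. x \<noteq> y \<longrightarrow> \<not> adjacent A x y \<and> \<not> directed_2path A x y"
  proof (intro ballI impI)
    fix x y assume xy: "x \<in> I" "y \<in> I" "x \<noteq> y"
    then obtain f where f: "oriented_coloring V A f" "f x = f y"
      using H unfolding oriented_independent_def by blast
    show "\<not> adjacent A x y \<and> \<not> directed_2path A x y"
      using f unfolding oriented_coloring_def adjacent_def directed_2path_def by metis
  qed
next
  assume H: "\<forall>x\<in>I. \<forall>y\<in>I. x \<noteq> y \<longrightarrow> \<not> adjacent A x y \<and> \<not> directed_2path A x y"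
  have fin: "finite V" and AV: "A \<subseteq> V \<times> V" and nl: "\<forall>x. (x, x) \<notin> A"
    and as: "\<forall>x y. (x, y) \<in> A \<longrightarrow> (y, x) \<notin> A"
    using assms(1) unfolding oriented_graph_def by auto
  obtain g :: "'a \<Rightarrow> nat" and n where g: "inj_on g V"
    using finite_imp_inj_to_nat_seg[OF fin] by blast
  show "oriented_independent V A I"
    unfolding oriented_independent_def
  proof (intro conjI ballI impI)
    show "I \<subseteq> V" by (rule assms(2))
    fix x y assume xy: "x \<in> I" "y \<in> I" "x \<noteq> y"
    have xV: "x \<in> V" and yV: "y \<in> V" using xy assms(2) by auto
    have na: "\<not> adjacent A x y" and np: "\<not> directed_2path A x y" using H xy by auto
    define f where "f z = (if z = y then g x else g z)" for z
    have key: "f u = f w \<longleftrightarrow> u = w \<or> (u = x \<and> w = y) \<or> (u = y \<and> w = x)"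
      if "u \<in> V" "w \<in> V" for u w
      using that xV yV g xy(3) unfolding f_def inj_on_def by auto
    have arcV: "a \<in> V \<and> b \<in> V" if "(a, b) \<in> A" for a b using that AV by auto
    have "oriented_coloring V A f"
      unfolding oriented_coloring_def
    proof (intro conjI allI impI)
      fix a b assume ab: "(a, b) \<in> A"
      show "f a \<noteq> f b"
        using key[of a b] arcV[OF ab] ab nl na unfolding adjacent_def by auto
    next
      fix a b c d assume ab: "(a, b) \<in> A" and cd: "(c, d) \<in> A" and e: "f b = f c"
      show "f a \<noteq> f d"
      proof
        assume e2: "f a = f d"
        have 1: "b = c \<or> (b = x \<and> c = y) \<or> (b = y \<and> c = x)"
          using key[of b c] arcV[OF ab] arcV[OF cd] e by auto
        have 2: "a = d \<or> (a = x \<and> d = y) \<or> (a = y \<and> d = x)"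
          using key[of a d] arcV[OF ab] arcV[OF cd] e2 by auto
        show False
          using 1 2 ab cd nl as na np unfolding adjacent_def directed_2path_def by metis
      qed
    qed
    then show "\<exists>f. oriented_coloring V A f \<and> f x = f y"
      using f_def by auto
  qed
qed

end
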